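(* Let $A\in\mathbb{R}^{n\times n}$ be Hurwitz, let $B_u\in\mathbb{R}^{n\times l}$ and $S_\eta\in\mathbb{R}^{n\times n_\eta}$ be given, and let $\bar\gamma>0$ be a given scalar. Let data samples $d_i=\begin{bmatrix}\hat x_i^\top & u_i^\top & \hat\eta_i^\top\end{bmatrix}^\top$, $i=1,\dots,N$, with $\hat x_i\in\mathbb{R}^n$, $u_i\in\mathbb{R}^l$, $\hat\eta_i\in\mathbb{R}^{n_\eta}$, be given and let $D=\sum_{i=1}^N d_id_i^\top$. Consider the convex program in the variables $Q=Q^\top\in\mathbb{R}^{n\times n}$, $\Theta_l\in\mathbb{R}^{n_\eta\times n}$, $B_l\in\mathbb{R}^{n_\eta\times l}$, $W=W^\top\in\mathbb{R}^{n_\eta\times n_\eta}$: $$\min\ \operatorname{tr}(W)\quad\text{s.t.}\quad \begin{bmatrix}AQ+QA^\top & S_\eta\Theta_l+\bar\gamma Q\\ \star & -2\bar\gamma I\end{bmatrix}\prec 0,\qquad \operatorname{tr}(TDT^\top)\le\operatorname{tr}(W),\qquad Q\succ 0,$$ where $T:=\begin{bmatrix}\Theta_l & B_l & -I_{n_\eta}\end{bmatrix}$. Let $(Q^\star,\Theta_l^\star,B_l^\star,W^\star)$ be an optimizer. Set $S_{\eta_l}=S_\eta$, $\Theta_l=\Theta_l^\star$, $B_l=B_l^\star$. Then the model $$\dot x=Ax+B_uu+S_{\eta}(\Theta_l^\star x+B_l^\star u)$$ is asymptotically stable (for $u=0$), i.e. $(A+S_\eta\Theta_l^\star)Q^\star+Q^\star(A+S_\eta\Theta_l^\star)^\top\prec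 0$ and hence $A+S_\eta\Theta_l^\star$ is Hurwitz. Moreover the cost $J=\sum_{i=1}^N e_i^\top e_i$ with $e_i:=\Theta_l^\star\hat x_i+B_l^\star u_i-\hat\eta_i$ satisfies $J\le\operatorname{tr}(W^\star)$.
   Context: Setting: one seeks a linear uncertainty model $\eta_l(x,u)=\Theta_lx+B_lu$ to augment the known linear model $\dot x=Ax+B_uu$ as $\dot x=Ax+B_uu+S_{\eta_l}\eta_l(x,u)$, fitted to data $(\hat x_i,u_i,\hat\eta_i)$ (estimates of state, input, and uncertainty) by the quadratic cost $J=\sum_i e_i^\top e_i=\sum_i d_i^\top T^\top T d_i=\operatorname{tr}(TDT^\top)$ with $T=[\Theta_l\ \ B_l\ \ -I]$, $e_i=Td_i$. The matrix $S_\eta$ indicates in which state equations the uncertainty enters in the true system $\dot x_s=Ax_s+B_uu+S_\eta\eta(x_s,u)+B_\omega\omega$. A matrix is Hurwitz if all its eigenvalues have negative real part; $\star$ denotes blocks determined by symmetry. *)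

theory Defs
  imports "HOL-Analysis.Analysis"
begin

text \<open>Matrices are HOL-Analysis vectors of vectors: M :: real^'c^'r has rows indexed by 'r.\<close>

definition sym_mat :: "real^'n^'n \<Rightarrow> bool" where
  "sym_mat M \<longleftrightarrow> transpose M = M"

definition pos_def :: "real^'n^'n \<Rightarrow> bool" where
  "pos_def M \<longleftrightarrow> sym_mat M \<and> (\<forall>x. x \<noteq> 0 \<longrightarrow> 0 < x \<bullet> (M *v x))"

definition neg_def :: "real^'n^'n \<Rightarrow> bool" where
  "neg_def M \<longleftrightarrow> pos_def (- M)"

definition cmat :: "real^'n^'m \<Rightarrow> complex^'n^'m" where
  "cmat M = (\<chi> i j. complex_of_real (M $ i $ j))"

definition hurwitz :: "real^'n^'n \<Rightarrow> bool" where
  "hurwitz M \<longleftrightarrow>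
     (\<forall>(c::complex) (v::complex^'n). v \<noteq> 0 \<and> cmat M *v v = c *s v \<longrightarrow> Re c < 0)"

definition lmi_mat ::
  "real^'n^'n \<Rightarrow> real^'k^'n \<Rightarrow> real \<Rightarrow> real^'n^'n \<Rightarrow> real^'n^'k \<Rightarrow> real^('n + 'n)^('n + 'n)" where
  "lmi_mat A S \<gamma> Q \<Theta> =
    (let M11 = A ** Q + Q ** transpose A;
         M12 = S ** \<Theta> + \<gamma> *\<^sub>R Q;
         M22 = (- 2 * \<gamma>) *\<^sub>R (mat 1 :: real^'n^'n)
     in (\<chi> i j. case (i, j) of
           (Inl a, Inl b) \<Rightarrow> M11 $ a $ b
         | (Inl a, Inr b) \<Rightarrow> M12 $ a $ b
         | (Inr a, Inl b) \<Rightarrow> (transpose M12) $ a $ b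
         | (Inr a, Inr b) \<Rightarrow> M22 $ a $ b))"

definition dvec :: "real^'n \<Rightarrow> real^'l \<Rightarrow> real^'k \<Rightarrow> real^('n + ('l + 'k))" where
  "dvec x u \<eta> = (\<chi> j. case j of Inl a \<Rightarrow> x $ a | Inr (Inl b) \<Rightarrow> u $ b | Inr (Inr c) \<Rightarrow> \<eta> $ c)"

definition Tmat :: "real^'n^'k \<Rightarrow> real^'l^'k \<Rightarrow> real^('n + ('l + 'k))^'k" where
  "Tmat \<Theta> B = (\<chi> r j. case j of Inl a \<Rightarrow> \<Theta> $ r $ a | Inr (Inl b) \<Rightarrow> B $ r $ b
                        | Inr (Inr c) \<Rightarrow> - (mat 1 :: real^'k^'k) $ r $ c)"

definition outer :: "real^'m \<Rightarrow> real^'m^'m" where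
  "outer d = (\<chi> i j. d $ i * d $ j)"

definition feasible ::
  "real^'n^'n \<Rightarrow> real^'k^'n \<Rightarrow> real \<Rightarrow> real^('n + ('l + 'k))^('n + ('l + 'k))
   \<Rightarrow> real^'n^'n \<Rightarrow> real^'n^'k \<Rightarrow> real^'l^'k \<Rightarrow> real^'k^'k \<Rightarrow> bool" where
  "feasible A S \<gamma> D Q \<Theta> B W \<longleftrightarrow>
     sym_mat Q \<and> sym_mat W \<and>
     neg_def (lmi_mat A S \<gamma> Q \<Theta>) \<and>
     trace (Tmat \<Theta> B ** D ** transpose (Tmat \<Theta> B)) \<le> trace W \<and>
     pos_def Q"

end

theory Submission
  imports Defs
begin


lemma sum_UNIV_plus: "(\<Sum>j\<in>(UNIV::('a::finite + 'b::finite) set). f j) = (\<Sum>a\<in>UNIV. f (Inl a)) + (\<Sum>b\<in>UNIV. f (Inr b))"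
proof -
  have "(\<Sum>j\<in>(UNIV::('a + 'b) set). f j) = (\<Sum>j\<in>(UNIV <+> UNIV). f j)" by simp
  also have "\<dots> = (\<Sum>a\<in>UNIV. f (Inl a)) + (\<Sum>b\<in>UNIV. f (Inr b))"
    by (subst sum.Plus) (simp_all add: comp_def)
  finally show ?thesis .
qed

lemma inner_transpose: "x \<bullet> (transpose M *v y) = (M *v x) \<bullet> (y::real^_)"
  by (simp add: dot_lmul_matrix[symmetric] inner_commute)

lemma inner_sym_mat: "sym_mat Q \<Longrightarrow> x \<bullet> (Q *v y) = (Q *v x) \<bullet> (y::real^_)"
  using inner_transpose[of x Q y] by (simp add: sym_mat_def)


lemma block_quad:
  fixes M11 :: "real^'a^'a" and M12 :: "real^'b^'a" and M21 :: "real^'a^'b" and M22 :: "real^'b^'b"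
  shows "(\<chi> j. case j of Inl a \<Rightarrow> x$a | Inr b \<Rightarrow> y$b) \<bullet>
     ((\<chi> i j. case (i, j) of (Inl a, Inl b) \<Rightarrow> M11 $ a $ b | (Inl a, Inr b) \<Rightarrow> M12 $ a $ b
         | (Inr a, Inl b) \<Rightarrow> M21 $ a $ b | (Inr a, Inr b) \<Rightarrow> M22 $ a $ b) *v
      (\<chi> j. case j of Inl a \<Rightarrow> x$a | Inr b \<Rightarrow> y$b))
   = x \<bullet> (M11 *v x) + x \<bullet> (M12 *v y) + y \<bullet> (M21 *v x) + y \<bullet> (M22 *v y)"
  unfolding inner_vec_def matrix_vector_mult_def
  by (simp add: sum_UNIV_plus distrib_left sum.distrib)

lemma Tmat_dvec: "Tmat \<Theta> B *v dvec x u \<eta> = \<Theta> *v x + B *v u - \<eta>"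
  unfolding vec_eq_iff
  by (simp add: Tmat_def dvec_def matrix_vector_mult_def sum_UNIV_plus mat_def sum_negf if_distrib[of "\<lambda>z. z * _"] cong: if_cong)


lemma matrix_add_rdistrib': "((B + C) ** A) = (B ** A) + (C ** A)"
  by (vector matrix_matrix_mult_def sum.distrib[symmetric] field_simps)

lemma trace_outer:
  fixes Tm :: "real^'m^'k"
  shows "trace (Tm ** outer d ** transpose Tm) = (Tm *v d) \<bullet> (Tm *v d)"
  unfolding trace_def matrix_matrix_mult_def transpose_def outer_def inner_vec_def matrix_vector_mult_def
  by (simp add: sum_product sum_distrib_left sum_distrib_right mult_ac)

lemma trace_sum:
  fixes Tm :: "real^'m^'k" and d :: "nat \<Rightarrow> real^'m"
  shows "trace (Tm ** (\<Sum>i\<in>I. outer (d i)) ** transpose Tm) = (\<Sum>i\<in>I. (Tm *v d i) \<bullet> (Tm *v d i))"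
proof (induction I rule: infinite_finite_induct)
  case (infinite A)
  then show ?case by (simp add: trace_def)
next
  case empty
  then show ?case by (simp add: trace_def)
next
  case (insert x F)
  then show ?case by (simp add: matrix_add_ldistrib matrix_add_rdistrib' trace_add trace_outer)
qed


lemma inner_neg_mat: "x \<bullet> ((- P) *v x) = - (x \<bullet> (P *v (x::real^_)))"
  by (simp add: matrix_vector_mult_def inner_vec_def sum_negf)

lemma sym_neg: "sym_mat (- P) \<longleftrightarrow> sym_mat (P::real^'n^'n)"
proof -
  have "transpose (- P) = - transpose P" by (simp add: transpose_def vec_eq_iff)
  then show ?thesis unfolding sym_mat_def by simp
qed

lemma transpose_add': "transpose (A + B) = transpose A + transpose (B::real^'n^'m)"
  by (simp add: transpose_def vec_eq_iff)

lemma matrix_transpose_mul': "transpose (A ** B) = transpose B ** transpose (A::real^'n^'m)"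
  by (rule matrix_transpose_mul)

lemma part1:
  fixes A :: "real^'n^'n" and S :: "real^'k^'n" and \<Theta> :: "real^'n^'k"
  assumes hQ: "sym_mat Q" and hL: "neg_def (lmi_mat A S \<gamma> Q \<Theta>)"
  shows "neg_def ((A + S ** \<Theta>) ** Q + Q ** transpose (A + S ** \<Theta>))"
proof -
  let ?F = "A + S ** \<Theta>"
  let ?P = "?F ** Q + Q ** transpose ?F"
  have QT: "transpose Q = Q" using hQ sym_mat_def by blast
  have sym: "sym_mat ?P"
    unfolding sym_mat_def by (simp add: transpose_add' matrix_transpose_mul' QT add.commute)
  have key: "x \<bullet> (?P *v x) < 0" if "x \<noteq> 0" for x
  proof -
    define y where "y = Q *v x"
    define z :: "real^('n+'n)" where "z = (\<chi> j. case j of Inl a \<Rightarrow> x$a | Inr b \<Rightarrow> y$b)"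
    have "z \<noteq> 0"
    proof
      assume "z = 0"
      then have "x = 0" unfolding z_def vec_eq_iff by (metis sum.simps(5) vec_lambda_beta zero_index)
      with that show False by simp
    qed
    with hL have neg: "z \<bullet> (lmi_mat A S \<gamma> Q \<Theta> *v z) < 0"
      unfolding neg_def_def pos_def_def inner_neg_mat by auto
    let ?M12 = "S ** \<Theta> + \<gamma> *\<^sub>R Q"
    have e1: "z \<bullet> (lmi_mat A S \<gamma> Q \<Theta> *v z) =
       x \<bullet> ((A ** Q + Q ** transpose A) *v x) + x \<bullet> (?M12 *v y) + y \<bullet> (transpose ?M12 *v x)
        + y \<bullet> (((- 2 * \<gamma>) *\<^sub>R (mat 1 :: real^'n^'n)) *v y)"
      unfolding lmi_mat_def Let_def z_def by (rule block_quad)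
    have Qxw: "x \<bullet> (Q *v w) = y \<bullet> w" for w
      using inner_sym_mat[OF hQ] y_def by simp
    have a1: "x \<bullet> ((A ** Q + Q ** transpose A) *v x) = 2 * (x \<bullet> (A *v y))"
      by (simp add: matrix_vector_mult_add_rdistrib matrix_vector_mul_assoc[symmetric] inner_add_right Qxw
          inner_transpose y_def inner_commute del: transpose_matrix_vector)
    have a2: "y \<bullet> (transpose ?M12 *v x) = x \<bullet> (?M12 *v y)"
      by (simp add: inner_transpose inner_commute del: transpose_matrix_vector)
    have a3: "x \<bullet> (?M12 *v y) = x \<bullet> ((S ** \<Theta>) *v y) + \<gamma> * (y \<bullet> y)"
      by (simp add: matrix_vector_mult_add_rdistrib inner_add_right scaleR_matrix_vector_assoc[symmetric] Qxw)
    have a4: "y \<bullet> (((- 2 * \<gamma>) *\<^sub>R (mat 1 :: real^'n^'n)) *v y) = - 2 * \<gamma> * (y \<bullet> y)"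
    proof -
      have "((- 2 * \<gamma>) *\<^sub>R (mat 1 :: real^'n^'n)) *v y = (- 2 * \<gamma>) *\<^sub>R y"
        by (simp only: scaleR_matrix_vector_assoc[symmetric] matrix_vector_mul_lid)
      then show ?thesis by simp
    qed
    have a5: "x \<bullet> (?P *v x) = 2 * (x \<bullet> (A *v y)) + 2 * (x \<bullet> ((S ** \<Theta>) *v y))"
      by (simp add: matrix_vector_mult_add_rdistrib matrix_vector_mul_assoc[symmetric] inner_add_right Qxw
          inner_transpose y_def inner_commute del: transpose_matrix_vector)
    show ?thesis using neg e1 a1 a2 a3 a4 a5 by linarith
  qed
  show ?thesis
    unfolding neg_def_def pos_def_def sym_neg inner_neg_mat using sym key by auto
qed

lemma pos_def_nonneg: "pos_def Q \<Longrightarrow> 0 \<le> x \<bullet> (Q *v x)"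
  unfolding pos_def_def by (cases "x = 0") (auto intro: less_imp_le)

lemma pos_def_surj:
  fixes Q :: "real^'n^'n"
  assumes "pos_def Q" shows "\<exists>p. Q *v p = a"
proof -
  have "inj (\<lambda>x. Q *v x)"
  proof (rule injI)
    fix x y assume "Q *v x = Q *v y"
    then have "Q *v (x - y) = 0" by (simp add: matrix_vector_mult_diff_distrib)
    then have "(x - y) \<bullet> (Q *v (x - y)) = 0" by simp
    with assms show "x = y" unfolding pos_def_def by (metis less_irrefl right_minus_eq)
  qed
  then have "surj (\<lambda>x. Q *v x)"
    using linear_injective_imp_surjective matrix_vector_mul_linear by blast
  then show ?thesis by (metis surjD)
qed

lemma part2:
  fixes F Q :: "real^'n^'n"
  assumes hQ: "pos_def Q" and hP: "neg_def (F ** Q + Q ** transpose F)"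
  shows "hurwitz F"
  unfolding hurwitz_def
proof (intro allI impI, elim conjE)
  fix c :: complex and v :: "complex^'n"
  assume v0: "v \<noteq> 0" and ev: "cmat F *v v = c *s v"
  define a :: "real^'n" where "a = (\<chi> i. Re (v$i))"
  define b :: "real^'n" where "b = (\<chi> i. Im (v$i))"
  define \<alpha> where "\<alpha> = Re c"
  define \<beta> where "\<beta> = Im c"
  have comp: "(\<Sum>j\<in>UNIV. complex_of_real (F$i$j) * v$j) = c * v$i" for i
    using ev unfolding vec_eq_iff cmat_def matrix_vector_mult_def by simp
  have Fa: "F *v a = \<alpha> *\<^sub>R a - \<beta> *\<^sub>R b"
  proof -
    have "Re (\<Sum>j\<in>UNIV. complex_of_real (F$i$j) * v$j) = Re (c * v$i)" for i using comp by simp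
    then show ?thesis unfolding vec_eq_iff a_def b_def \<alpha>_def \<beta>_def matrix_vector_mult_def by simp
  qed
  have Fb: "F *v b = \<beta> *\<^sub>R a + \<alpha> *\<^sub>R b"
  proof -
    have "Im (\<Sum>j\<in>UNIV. complex_of_real (F$i$j) * v$j) = Im (c * v$i)" for i using comp by simp
    then show ?thesis unfolding vec_eq_iff a_def b_def \<alpha>_def \<beta>_def matrix_vector_mult_def
      by (simp add: algebra_simps)
  qed
  have ab: "a \<noteq> 0 \<or> b \<noteq> 0"
  proof (rule ccontr)
    assume "\<not> (a \<noteq> 0 \<or> b \<noteq> 0)"
    then have "v = 0" unfolding a_def b_def vec_eq_iff by (simp add: complex_eq_iff)
    with v0 show False by simp
  qed
  obtain p where p: "Q *v p = a" using pos_def_surj[OF hQ] by blast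
  obtain q where q: "Q *v q = b" using pos_def_surj[OF hQ] by blast
  have QS: "sym_mat Q" using hQ pos_def_def by blast
  have pq: "p \<noteq> 0 \<or> q \<noteq> 0" using ab p q by auto
  let ?P = "F ** Q + Q ** transpose F"
  have negq: "x \<bullet> (?P *v x) < 0" if "x \<noteq> 0" for x
    using hP that unfolding neg_def_def pos_def_def inner_neg_mat by auto
  have negq0: "x \<bullet> (?P *v x) \<le> 0" for x
    using negq[of x] by (cases "x = 0") auto
  have quad: "x \<bullet> (?P *v x) = 2 * (x \<bullet> (F *v (Q *v x)))" for x
    by (simp add: matrix_vector_mult_add_rdistrib matrix_vector_mul_assoc[symmetric] inner_add_right
          inner_sym_mat[OF QS, of x] inner_transpose inner_commute del: transpose_matrix_vector)
  have sum_neg: "p \<bullet> (?P *v p) + q \<bullet> (?P *v q) < 0"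
    using pq negq negq0 by (meson add_neg_nonpos add_nonpos_neg)
  have pb: "p \<bullet> b = q \<bullet> a"
    using inner_sym_mat[OF QS, of p q] p q by (simp add: inner_commute)
  have "p \<bullet> (?P *v p) + q \<bullet> (?P *v q) = 2 * \<alpha> * (p \<bullet> a + q \<bullet> b)"
    unfolding quad p q Fa Fb by (simp add: inner_diff_right inner_add_right pb algebra_simps)
  moreover have "p \<bullet> a + q \<bullet> b > 0"
  proof -
    have "p \<bullet> a \<ge> 0" "q \<bullet> b \<ge> 0" using pos_def_nonneg[OF hQ] p q by auto
    moreover have "p \<noteq> 0 \<Longrightarrow> p \<bullet> a > 0" "q \<noteq> 0 \<Longrightarrow> q \<bullet> b > 0"
      using hQ p q unfolding pos_def_def by auto
    ultimately show ?thesis using pq by fastforce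
  qed
  ultimately have "\<alpha> * (p \<bullet> a + q \<bullet> b) < 0" using sum_neg by linarith
  then show "Re c < 0" unfolding \<alpha>_def
    using \<open>p \<bullet> a + q \<bullet> b > 0\<close> by (simp add: mult_less_0_iff)
qed


theorem theorem2:
  fixes A :: "real^'n^'n" and Bu :: "real^'l^'n" and S :: "real^'k^'n"
    and \<gamma> :: real and N :: nat
    and xh :: "nat \<Rightarrow> real^'n" and u :: "nat \<Rightarrow> real^'l" and \<eta>h :: "nat \<Rightarrow> real^'k"
    and D :: "real^('n + ('l + 'k))^('n + ('l + 'k))"
    and Q :: "real^'n^'n" and \<Theta> :: "real^'n^'k" and Bl :: "real^'l^'k" and W :: "real^'k^'k"
  assumes hA: "hurwitz A"
    and h\<gamma>: "\<gamma> > 0"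
    and hD: "D = (\<Sum>i\<in>{1..N}. outer (dvec (xh i) (u i) (\<eta>h i)))"
    and hfeas: "feasible A S \<gamma> D Q \<Theta> Bl W"
    and hopt: "\<And>Q' \<Theta>' Bl' W'. feasible A S \<gamma> D Q' \<Theta>' Bl' W' \<Longrightarrow> trace W \<le> trace W'"
  shows "neg_def ((A + S ** \<Theta>) ** Q + Q ** transpose (A + S ** \<Theta>))
       \<and> hurwitz (A + S ** \<Theta>)
       \<and> (\<Sum>i\<in>{1..N}. (\<Theta> *v xh i + Bl *v u i - \<eta>h i) \<bullet> (\<Theta> *v xh i + Bl *v u i - \<eta>h i)) \<le> trace W"
  proof -
  have hQ: "pos_def Q" and hL: "neg_def (lmi_mat A S \<gamma> Q \<Theta>)" and QS: "sym_mat Q"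
    and hT: "trace (Tmat \<Theta> Bl ** D ** transpose (Tmat \<Theta> Bl)) \<le> trace W"
    using hfeas unfolding feasible_def by auto
  have 1: "neg_def ((A + S ** \<Theta>) ** Q + Q ** transpose (A + S ** \<Theta>))"
    by (rule part1[OF QS hL])
  have 2: "hurwitz (A + S ** \<Theta>)" by (rule part2[OF hQ 1])
  have "trace (Tmat \<Theta> Bl ** D ** transpose (Tmat \<Theta> Bl)) =
     (\<Sum>i\<in>{1..N}. (\<Theta> *v xh i + Bl *v u i - \<eta>h i) \<bullet> (\<Theta> *v xh i + Bl *v u i - \<eta>h i))"
    unfolding hD trace_sum Tmat_dvec ..
  with 1 2 hT show ?thesis by simp
qed

end
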